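(* Let $\Theta\subseteq\mathbb{R}^p$ be convex, and let $f:\mathbb{R}^p\to\mathbb{R}$ be continuous, convex, and bounded below, with a minimizer $\theta^\star$ on $\Theta$; set $f^\star\triangleq f(\theta^\star)$. Let $\theta_0\in\Theta$ and consider the sequence generated by: for $n\ge1$, choose $g_n\in\mathcal{S}_L(f,\theta_{n-1})$ and set $\theta_n\in\operatorname{arg\,min}_{\theta\in\Theta}g_n(\theta)$. (i) If there is $R>0$ such that $\|\theta-\theta^\star\|_2\le R$ for all $\theta\in\Theta$ with $f(\theta)\le f(\theta_0)$, then $f(\theta_n)-f^\star\le \frac{2LR^2}{n+2}$ for all $n\ge1$. (ii) If $f$ is $\mu$-strongly convex (with no level-set assumption), then $f(\theta_n)-f^\star\le\beta^n(f(\theta_0)-f^\star)$ for all $n\ge1$, where $\beta\triangleq\frac{L}{\mu}$ if $\mu>2L$ and $\beta\triangleq 1-\frac{\mu}{4L}$ otherwise.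
   Context: First-order surrogates: given convex $\Theta\subseteq\mathbb{R}^p$, $g:\mathbb{R}^p\to\mathbb{R}$ belongs to $\mathcal{S}_L(f,\kappa)$ if (a) $g(\theta')\ge f(\theta')$ for all $\theta'\in\operatorname{arg\,min}_{\theta\in\Theta}g(\theta)$, and (b) $h\triangleq g-f$ is differentiable on $\mathbb{R}^p$ with $L$-Lipschitz gradient, $h(\kappa)=0$ and $\nabla h(\kappa)=0$. The minimizers $\theta_n$ are assumed to exist. *)

theory Defs
  imports "HOL-Analysis.Analysis"
begin

definition is_argmin_on :: "'a set \<Rightarrow> ('a \<Rightarrow> real) \<Rightarrow> 'a \<Rightarrow> bool" where
  "is_argmin_on Th g x \<longleftrightarrow> x \<in> Th \<and> (\<forall>y\<in>Th. g x \<le> g y)"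

definition first_order_surrogate ::
  "'a::euclidean_space set \<Rightarrow> real \<Rightarrow> ('a \<Rightarrow> real) \<Rightarrow> 'a \<Rightarrow> ('a \<Rightarrow> real) \<Rightarrow> bool" where
  "first_order_surrogate Th L f \<kappa> g \<longleftrightarrow>
     (\<forall>x. is_argmin_on Th g x \<longrightarrow> f x \<le> g x) \<and>
     (\<exists>dh :: 'a \<Rightarrow> 'a.
        (\<forall>x. ((\<lambda>y. g y - f y) has_derivative (\<lambda>v. dh x \<bullet> v)) (at x)) \<and>
        (\<forall>x y. norm (dh x - dh y) \<le> L * norm (x - y)) \<and>
        g \<kappa> - f \<kappa> = 0 \<and> dh \<kappa> = 0)"

definition strongly_convex :: "real \<Rightarrow> ('a::real_normed_vector \<Rightarrow> real) \<Rightarrow> bool" where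
  "strongly_convex \<mu> f \<longleftrightarrow>
     (\<forall>x y t. 0 \<le> t \<and> t \<le> 1 \<longrightarrow>
        f (t *\<^sub>R x + (1 - t) *\<^sub>R y) \<le> t * f x + (1 - t) * f y - \<mu> / 2 * t * (1 - t) * (norm (x - y))\<^sup>2)"

end

theory Submission imports Defs begin

lemma descent:
  fixes h :: "'a::euclidean_space \<Rightarrow> real" and dh :: "'a \<Rightarrow> 'a"
  assumes der: "\<And>x. (h has_derivative (\<lambda>v. dh x \<bullet> v)) (at x)"
    and lip: "\<And>x y. norm (dh x - dh y) \<le> L * norm (x - y)"
  shows "h y \<le> h x + dh x \<bullet> (y - x) + L / 2 * (norm (y - x))\<^sup>2"
proof -
  define v where "v = y - x"
  define \<psi> where "\<psi> t = h (x + t *\<^sub>R v) - t * (dh x \<bullet> v) - L / 2 * t\<^sup>2 * (norm v)\<^sup>2" for t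
  have "\<psi> 1 \<le> \<psi> 0"
  proof (rule DERIV_nonpos_imp_nonincreasing[of 0 1])
    fix t :: real assume t: "0 \<le> t" "t \<le> 1"
    have l: "((\<lambda>t. x + t *\<^sub>R v) has_derivative (\<lambda>s. s *\<^sub>R v)) (at t)"
      by (auto intro!: derivative_eq_intros)
    have c: "((\<lambda>t. h (x + t *\<^sub>R v)) has_derivative (\<lambda>s. dh (x + t *\<^sub>R v) \<bullet> (s *\<^sub>R v))) (at t)"
      using has_derivative_compose[OF l der] by simp
    have c2: "((\<lambda>t. h (x + t *\<^sub>R v)) has_field_derivative (dh (x + t *\<^sub>R v) \<bullet> v)) (at t)"
      unfolding has_field_derivative_def
    proof -
      have "(*) (dh (x + t *\<^sub>R v) \<bullet> v) = (\<lambda>s. dh (x + t *\<^sub>R v) \<bullet> (s *\<^sub>R v))"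
        by (auto simp: mult.commute)
      then show "((\<lambda>t. h (x + t *\<^sub>R v)) has_derivative (*) (dh (x + t *\<^sub>R v) \<bullet> v)) (at t)"
        using c by simp
    qed
    have D: "(\<psi> has_field_derivative (dh (x + t *\<^sub>R v) \<bullet> v - dh x \<bullet> v - L * t * (norm v)\<^sup>2)) (at t)"
      unfolding \<psi>_def
      by (rule derivative_eq_intros c2 refl | simp)+
    have "(dh (x + t *\<^sub>R v) - dh x) \<bullet> v \<le> norm (dh (x + t *\<^sub>R v) - dh x) * norm v"
      by (rule norm_cauchy_schwarz[THEN order_trans]) simp
    also have "\<dots> \<le> L * norm (t *\<^sub>R v) * norm v"
      using lip[of "x + t *\<^sub>R v" x] by (intro mult_right_mono) auto
    also have "\<dots> = L * t * (norm v)\<^sup>2" using t by (simp add: power2_eq_square)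
    finally have "dh (x + t *\<^sub>R v) \<bullet> v - dh x \<bullet> v - L * t * (norm v)\<^sup>2 \<le> 0"
      by (simp add: inner_diff_left)
    with D show "\<exists>y. DERIV \<psi> t :> y \<and> y \<le> 0" by blast
  qed simp
  then show ?thesis unfolding \<psi>_def v_def by simp
qed

theorem proposition2p2:
  fixes Th :: "'a::euclidean_space set"
    and f :: "'a \<Rightarrow> real"
    and \<theta>s :: 'a
    and L :: real
    and \<theta> :: "nat \<Rightarrow> 'a"
    and g :: "nat \<Rightarrow> 'a \<Rightarrow> real"
  assumes convTh: "convex Th"
    and contf: "continuous_on UNIV f"
    and convf: "convex_on UNIV f"
    and bddf: "bdd_below (range f)"
    and min_in: "\<theta>s \<in> Th"
    and min: "\<forall>x\<in>Th. f \<theta>s \<le> f x"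
    and Lpos: "L > 0"
    and init: "\<theta> 0 \<in> Th"
    and surr: "\<forall>n\<ge>1. first_order_surrogate Th L f (\<theta> (n - 1)) (g n)"
    and step: "\<forall>n\<ge>1. is_argmin_on Th (g n) (\<theta> n)"
  shows "(\<forall>R > 0. (\<forall>x\<in>Th. f x \<le> f (\<theta> 0) \<longrightarrow> norm (x - \<theta>s) \<le> R) \<longrightarrow>
            (\<forall>n\<ge>1. f (\<theta> n) - f \<theta>s \<le> 2 * L * R\<^sup>2 / (real n + 2)))
       \<and> (\<forall>\<mu> > 0. strongly_convex \<mu> f \<longrightarrow>
            (let \<beta> = (if \<mu> > 2 * L then L / \<mu> else 1 - \<mu> / (4 * L)) in
             \<forall>n\<ge>1. f (\<theta> n) - f \<theta>s \<le> \<beta> ^ n * (f (\<theta> 0) - f \<theta>s)))"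
proof -
  have Thn: "\<theta> n \<in> Th" for n
    using init step unfolding is_argmin_on_def by (cases "n = 0") auto
  have key: "f (\<theta> n) \<le> f x + L / 2 * (norm (x - \<theta> (n - 1)))\<^sup>2" if n: "n \<ge> 1" and x: "x \<in> Th" for n x
  proof -
    from surr n obtain dh where
      maj: "\<forall>x. is_argmin_on Th (g n) x \<longrightarrow> f x \<le> g n x" and
      der: "\<forall>x. ((\<lambda>y. g n y - f y) has_derivative (\<lambda>v. dh x \<bullet> v)) (at x)" and
      lip: "\<forall>x y. norm (dh x - dh y) \<le> L * norm (x - y)" and
      z: "g n (\<theta> (n - 1)) - f (\<theta> (n - 1)) = 0" "dh (\<theta> (n - 1)) = 0"
      unfolding first_order_surrogate_def by blast
    have "g n x - f x \<le> (g n (\<theta> (n - 1)) - f (\<theta> (n - 1))) + dh (\<theta> (n - 1)) \<bullet> (x - \<theta> (n - 1))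
        + L / 2 * (norm (x - \<theta> (n - 1)))\<^sup>2"
      using descent[where h="\<lambda>y. g n y - f y" and dh=dh and L=L] der lip by blast
    then have gx: "g n x \<le> f x + L / 2 * (norm (x - \<theta> (n - 1)))\<^sup>2" using z by simp
    have am: "is_argmin_on Th (g n) (\<theta> n)" using step n by blast
    then have "f (\<theta> n) \<le> g n (\<theta> n)" using maj by blast
    also have "\<dots> \<le> g n x" using am x unfolding is_argmin_on_def by blast
    finally show ?thesis using gx by linarith
  qed
  have mono: "f (\<theta> n) \<le> f (\<theta> (n - 1))" if "n \<ge> 1" for n
    using key[OF that Thn[of "n - 1"]] by simp
  have le0: "f (\<theta> n) \<le> f (\<theta> 0)" for n
  proof (induction n)
    case (Suc n) then show ?case using mono[of "Suc n"] by simp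
  qed simp
  have rpos: "f (\<theta> n) - f \<theta>s \<ge> 0" for n using min Thn by auto
  have comb: "f (\<theta> n) \<le> f (a *\<^sub>R \<theta>s + (1 - a) *\<^sub>R \<theta> (n - 1)) + L / 2 * a\<^sup>2 * (norm (\<theta>s - \<theta> (n - 1)))\<^sup>2"
    if n: "n \<ge> 1" and a: "0 \<le> a" "a \<le> 1" for n a
  proof -
    have mem: "a *\<^sub>R \<theta>s + (1 - a) *\<^sub>R \<theta> (n - 1) \<in> Th"
      using convexD[OF convTh min_in Thn[of "n - 1"]] a by simp
    have "a *\<^sub>R \<theta>s + (1 - a) *\<^sub>R \<theta> (n - 1) - \<theta> (n - 1) = a *\<^sub>R (\<theta>s - \<theta> (n - 1))"
      by (simp add: algebra_simps)
    then have "(norm (a *\<^sub>R \<theta>s + (1 - a) *\<^sub>R \<theta> (n - 1) - \<theta> (n - 1)))\<^sup>2 = a\<^sup>2 * (norm (\<theta>s - \<theta> (n - 1)))\<^sup>2"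
      using a by (simp add: power_mult_distrib)
    then show ?thesis using key[OF n mem] by simp
  qed
  show ?thesis
  proof (intro conjI allI impI)
    fix R :: real and n :: nat
    assume R: "R > 0" and lev: "\<forall>x\<in>Th. f x \<le> f (\<theta> 0) \<longrightarrow> norm (x - \<theta>s) \<le> R"
      and n1: "1 \<le> n"
    have D: "(norm (\<theta>s - \<theta> k))\<^sup>2 \<le> R\<^sup>2" for k
    proof -
      have "norm (\<theta> k - \<theta>s) \<le> R" using lev Thn le0 by blast
      then show ?thesis by (simp add: norm_minus_commute power_mono)
    qed
    define c where "c = L * R\<^sup>2"
    have c0: "c > 0" using Lpos R by (simp add: c_def)
    have rec: "f (\<theta> n) - f \<theta>s \<le> (1 - a) * (f (\<theta> (n - 1)) - f \<theta>s) + a\<^sup>2 * c / 2"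
      if n: "n \<ge> 1" and a: "0 \<le> a" "a \<le> 1" for n a
    proof -
      have "f (a *\<^sub>R \<theta>s + (1 - a) *\<^sub>R \<theta> (n - 1)) \<le> a * f \<theta>s + (1 - a) * f (\<theta> (n - 1))"
        using convex_onD[OF convf, of "1 - a" \<theta>s "\<theta> (n - 1)"] a by simp
      moreover have "L / 2 * a\<^sup>2 * (norm (\<theta>s - \<theta> (n - 1)))\<^sup>2 \<le> L / 2 * a\<^sup>2 * R\<^sup>2"
        using D[of "n - 1"] Lpos by (intro mult_left_mono) auto
      ultimately show ?thesis using comb[OF n a] by (simp add: c_def algebra_simps)
    qed
    have main: "f (\<theta> (Suc m)) - f \<theta>s \<le> 2 * c / (real m + 3)" for m
    proof (induction m)
      case 0
      show ?case using rec[of 1 1] c0 by simp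
    next
      case (Suc m)
      define k where "k = real m + 3"
      have k: "k \<ge> 3" by (simp add: k_def)
      define a where "a = 2 / (k + 1)"
      have a: "0 \<le> a" "a \<le> 1" using k by (auto simp: a_def)
      have r: "f (\<theta> (Suc (Suc m))) - f \<theta>s \<le> (1 - a) * (f (\<theta> (Suc m)) - f \<theta>s) + a\<^sup>2 * c / 2"
        using rec[of "Suc (Suc m)" a] a by simp
      have "(1 - a) * (f (\<theta> (Suc m)) - f \<theta>s) \<le> (1 - a) * (2 * c / k)"
        using Suc.IH a by (intro mult_left_mono) (auto simp: k_def)
      moreover have "(1 - a) * (2 * c / k) + a\<^sup>2 * c / 2 \<le> 2 * c / (k + 1)"
      proof -
        have "(1 - a) * (2 * c / k) + a\<^sup>2 * c / 2 = 2 * c * ((k - 1) / ((k + 1) * k) + 1 / (k + 1)^2)"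
        proof -
          have e1: "1 - a = (k - 1) / (k + 1)" using k by (simp add: a_def field_simps)
          have e2: "a\<^sup>2 * c / 2 = 2 * c * (1 / (k + 1)^2)"
            using k by (simp add: a_def power_divide)
          show ?thesis unfolding e1 e2 by (simp add: algebra_simps)
        qed
        also have "\<dots> \<le> 2 * c * (1 / (k + 1))"
        proof (intro mult_left_mono)
          have "1 / (k + 1)^2 \<le> 1 / ((k + 1) * k)"
            using k by (intro divide_left_mono) (auto simp: power2_eq_square)
          moreover have "(k - 1) / ((k + 1) * k) + 1 / ((k + 1) * k) = k / ((k + 1) * k)"
            by (simp add: add_divide_distrib[symmetric])
          moreover have "k / ((k + 1) * k) = 1 / (k + 1)" using k by simp
          ultimately show "(k - 1) / ((k + 1) * k) + 1 / (k + 1)^2 \<le> 1 / (k + 1)" by linarith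
        qed (use c0 in auto)
        finally show ?thesis by simp
      qed
      ultimately show ?case using r by (simp add: k_def add.commute add.left_commute)
    qed
    obtain m where "n = Suc m" using n1 by (cases n) auto
    then show "f (\<theta> n) - f \<theta>s \<le> 2 * L * R\<^sup>2 / (real n + 2)"
      using main[of m] by (simp add: c_def add.commute add.left_commute mult.assoc)
  next
    fix \<mu> :: real assume mu: "\<mu> > 0" and sc: "strongly_convex \<mu> f"
    define \<beta> where "\<beta> = (if \<mu> > 2 * L then L / \<mu> else 1 - \<mu> / (4 * L))"
    define q where "q = L / (L + \<mu>)"
    have qb: "q \<le> \<beta>"
    proof (cases "\<mu> > 2 * L")
      case True
      then show ?thesis using mu Lpos by (simp add: q_def \<beta>_def frac_le)
    next
      case False
      have "L / (L + \<mu>) = 1 - \<mu> / (L + \<mu>)" using mu Lpos by (simp add: field_simps)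
      moreover have "\<mu> / (4 * L) \<le> \<mu> / (L + \<mu>)" using False mu Lpos
        by (intro divide_left_mono) auto
      ultimately show ?thesis using False by (simp add: q_def \<beta>_def)
    qed
    have b0: "\<beta> \<ge> 0"
      using mu Lpos by (auto simp: \<beta>_def field_simps)
    have rec: "f (\<theta> n) - f \<theta>s \<le> \<beta> * (f (\<theta> (n - 1)) - f \<theta>s)" if n: "n \<ge> 1" for n
    proof -
      define a where "a = \<mu> / (L + \<mu>)"
      have a: "0 \<le> a" "a \<le> 1" using mu Lpos by (auto simp: a_def)
      define d where "d = (norm (\<theta>s - \<theta> (n - 1)))\<^sup>2"
      have "f (a *\<^sub>R \<theta>s + (1 - a) *\<^sub>R \<theta> (n - 1)) \<le> a * f \<theta>s + (1 - a) * f (\<theta> (n - 1)) - \<mu> / 2 * a * (1 - a) * d"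
        using sc a unfolding strongly_convex_def d_def by blast
      then have "f (\<theta> n) \<le> a * f \<theta>s + (1 - a) * f (\<theta> (n - 1)) + (L / 2 * a\<^sup>2 - \<mu> / 2 * a * (1 - a)) * d"
        using comb[OF n a] unfolding d_def by (simp add: algebra_simps)
      moreover have "L / 2 * a\<^sup>2 - \<mu> / 2 * a * (1 - a) = 0"
        using mu Lpos by (simp add: a_def field_simps power2_eq_square)
      ultimately have H: "f (\<theta> n) \<le> a * f \<theta>s + (1 - a) * f (\<theta> (n - 1))" by simp
      have "a = 1 - q" using mu Lpos by (simp add: a_def q_def field_simps)
      with H have "f (\<theta> n) - f \<theta>s \<le> q * (f (\<theta> (n - 1)) - f \<theta>s)"
        by (simp add: algebra_simps)
      also have "\<dots> \<le> \<beta> * (f (\<theta> (n - 1)) - f \<theta>s)"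
        using qb rpos by (intro mult_right_mono) auto
      finally show ?thesis .
    qed
    have all: "f (\<theta> n) - f \<theta>s \<le> \<beta> ^ n * (f (\<theta> 0) - f \<theta>s)" for n
    proof (induction n)
      case (Suc n)
      have "f (\<theta> (Suc n)) - f \<theta>s \<le> \<beta> * (f (\<theta> n) - f \<theta>s)" using rec[of "Suc n"] by simp
      also have "\<dots> \<le> \<beta> * (\<beta> ^ n * (f (\<theta> 0) - f \<theta>s))"
        using Suc.IH b0 by (intro mult_left_mono) auto
      finally show ?case by (simp add: mult.assoc)
    qed simp
    show "let \<beta> = (if \<mu> > 2 * L then L / \<mu> else 1 - \<mu> / (4 * L)) in
             \<forall>n\<ge>1. f (\<theta> n) - f \<theta>s \<le> \<beta> ^ n * (f (\<theta> 0) - f \<theta>s)"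
      using all unfolding \<beta>_def Let_def by blast
  qed
qed

end
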